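(* Let $f:[0,\infty)\to[0,\infty)$ be continuously differentiable with $f>0$ on $[t_0,\infty)$ for some $t_0\ge0$ and $f\in C^2([t_0,\infty))$, let $g=\log f$ on $[t_0,\infty)$, and assume condition (H1) of the context with $q>1$ (and corresponding $p$). Let $(s_n),(t_n)\subset(0,\infty)$ and $x\in[0,1]$ satisfy $s_n<t_n$ for all $n$, $s_n\to\infty$ and $s_n/t_n\to x$. Then $$\lim_{n\to\infty}\frac{g(s_n)}{g(t_n)}=x^p=\lim_{n\to\infty}\left(\frac{g'(s_n)}{g'(t_n)}\right)^q.$$
   Context: Condition (H1): (i) $g'(t)>0$ and $g''(t)>0$ for all $t\ge t_0$, and there is a pair $(q,p)$ with either $q=1$ and $p\in(0,\infty]$, or $q\in(1,\infty)$ and $p\in(0,\infty)$, such that $\lim_{t\to\infty}\frac{g'(t)^2}{g(t)g''(t)}=q$ and $\lim_{t\to\infty}\frac{tg'(t)}{g(t)}=p$; (ii) if $q=1$, then $tg'(t)/g(t)$ is nondecreasing on $[t_0,\infty)$ and there exist $k\in\mathbb{N}$ and $\hat g\in C^2([t_0,\infty))$ with $f=\exp_k\circ\hat g$ and $\hat g'/\hat g$ nonincreasing on $[t_0,\infty)$. *)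

theory Defs
  imports "HOL-Analysis.Analysis"
begin

end

theory Submission imports Defs begin

lemma key:
  fixes h h' :: "real \<Rightarrow> real" and T r x :: real and s t :: "nat \<Rightarrow> real"
  assumes der: "\<forall>y>T. (h has_real_derivative h' y) (at y)"
    and hpos: "\<forall>y>T. h y > 0"
    and lim: "((\<lambda>y. y * h' y / h y) \<longlongrightarrow> r) at_top" and r: "r > 0"
    and s_pos: "\<forall>n. s n > 0" and st: "\<forall>n. s n < t n"
    and s_inf: "filterlim s at_top sequentially"
    and x: "x \<in> {0..1}"
    and ratio: "(\<lambda>n. s n / t n) \<longlonglongrightarrow> x"
  shows "(\<lambda>n. h (s n) / h (t n)) \<longlonglongrightarrow> x powr r"
proof -
  have mvt: "\<exists>c. a < c \<and> c < b \<and> ln (h b) - ln (h a) = c * h' c / h c * (ln b - ln a)"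
    if ab: "max T 0 < a" "a < b" for a b
  proof -
    have "\<exists>c. a < c \<and> c < b \<and> (ln (h b) - ln (h a)) * (1 / c) = (ln b - ln a) * (h' c / h c)"
    proof (rule GMVT')
      fix z assume z: "a \<le> z" "z \<le> b"
      then have zT: "z > T" "z > 0" using ab by auto
      have "(h has_real_derivative h' z) (at z)" using der zT by auto
      then have "isCont h z" by (rule DERIV_isCont)
      then show "isCont (\<lambda>u. ln (h u)) z" using hpos zT by (auto intro!: continuous_intros)
      show "isCont ln z" using zT by (auto intro!: continuous_intros)
    next
      fix z assume z: "a < z" "z < b"
      then have zT: "z > T" "z > 0" using ab by auto
      show "(ln has_real_derivative 1 / z) (at z)" using zT
        by (auto intro!: derivative_eq_intros)
      have "(h has_real_derivative h' z) (at z)" using der zT by auto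
      then show "((\<lambda>u. ln (h u)) has_real_derivative h' z / h z) (at z)" using hpos zT
        by (auto intro!: derivative_eq_intros simp: field_simps)
    qed (use ab in auto)
    then obtain c where c: "a < c" "c < b" "(ln (h b) - ln (h a)) * (1 / c) = (ln b - ln a) * (h' c / h c)" by blast
    have "c > 0" using c ab by auto
    then have "ln (h b) - ln (h a) = c * h' c / h c * (ln b - ln a)" using c(3)
      by (auto simp: field_simps)
    then show ?thesis using c by blast
  qed
  have "\<forall>n. \<exists>c. max T 0 < s n \<longrightarrow> s n < c \<and> c < t n \<and>
      ln (h (t n)) - ln (h (s n)) = c * h' c / h c * (ln (t n) - ln (s n))"
    using mvt st by metis
  then obtain \<xi> where xi: "\<And>n. max T 0 < s n \<Longrightarrow> s n < \<xi> n \<and> \<xi> n < t n \<and>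
      ln (h (t n)) - ln (h (s n)) = \<xi> n * h' (\<xi> n) / h (\<xi> n) * (ln (t n) - ln (s n))"
    by metis
  have ev: "eventually (\<lambda>n. max T 0 < s n) sequentially"
    using s_inf unfolding filterlim_at_top_dense by blast
  have xi_inf: "filterlim \<xi> at_top sequentially"
    by (rule filterlim_at_top_mono[OF s_inf]) (use ev xi in \<open>auto elim!: eventually_mono intro: less_imp_le\<close>)
  define R where "R n = \<xi> n * h' (\<xi> n) / h (\<xi> n)" for n
  have R: "R \<longlonglongrightarrow> r" unfolding R_def
    using filterlim_compose[OF lim xi_inf] by simp
  have eq: "eventually (\<lambda>n. h (s n) / h (t n) = exp (R n * ln (s n / t n))) sequentially"
    using ev
  proof (rule eventually_mono)
    fix n assume n: "max T 0 < s n"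
    have pos: "h (s n) > 0" "h (t n) > 0" "t n > 0" using n hpos st[rule_format, of n] by auto
    have "ln (h (t n)) - ln (h (s n)) = R n * (ln (t n) - ln (s n))" using xi[OF n] by (simp add: R_def)
    then have "ln (h (s n) / h (t n)) = R n * ln (s n / t n)"
      using pos n by (simp add: ln_div algebra_simps)
    then show "h (s n) / h (t n) = exp (R n * ln (s n / t n))"
      using pos by (metis divide_pos_pos exp_ln)
  qed
  have "(\<lambda>n. exp (R n * ln (s n / t n))) \<longlonglongrightarrow> x powr r"
  proof (cases "x = 0")
    case False
    then have "x > 0" using x by auto
    have "(\<lambda>n. exp (R n * ln (s n / t n))) \<longlonglongrightarrow> exp (r * ln x)"
      using False by (intro tendsto_intros R ratio)
    then show ?thesis using False by (simp add: powr_def)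
  next
    case True
    have "filterlim (\<lambda>n. s n / t n) (at_right 0) sequentially"
      using ratio True st s_pos
      by (intro tendsto_imp_filterlim_at_right) (auto intro!: always_eventually divide_pos_pos
          less_trans[of 0 "s _" "t _"])
    then have "filterlim (\<lambda>n. ln (s n / t n)) at_bot sequentially"
      by (rule filterlim_compose[OF ln_at_0])
    then have "filterlim (\<lambda>n. R n * ln (s n / t n)) at_bot sequentially"
      by (rule filterlim_tendsto_pos_mult_at_bot[OF R r])
    then have "(\<lambda>n. exp (R n * ln (s n / t n))) \<longlonglongrightarrow> 0"
      by (rule filterlim_compose[OF exp_at_bot])
    then show ?thesis using True by simp
  qed
  moreover have "eventually (\<lambda>n. exp (R n * ln (s n / t n)) = h (s n) / h (t n)) sequentially"
    using eq by (simp add: eq_commute)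
  ultimately show ?thesis by (simp only: tendsto_cong[of _ "\<lambda>n. h (s n) / h (t n)", symmetric])
qed

theorem lemma2p8:
  fixes f f' f'' g1 g2 :: "real \<Rightarrow> real"
    and t0 p q x :: real and s t :: "nat \<Rightarrow> real"
  assumes t0: "t0 \<ge> 0"
    and f_nonneg: "\<forall>y\<ge>0. f y \<ge> 0"
    and f_C1: "\<forall>y\<ge>0. (f has_real_derivative f' y) (at y within {0..})"
    and f'_cont: "continuous_on {0..} f'"
    and f_pos: "\<forall>y\<ge>t0. f y > 0"
    and f_C2: "\<forall>y\<ge>t0. (f' has_real_derivative f'' y) (at y within {t0..})"
    and f''_cont: "continuous_on {t0..} f''"
    and g1: "\<forall>y\<ge>t0. ((\<lambda>u. ln (f u)) has_real_derivative g1 y) (at y within {t0..})"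
    and g2: "\<forall>y\<ge>t0. (g1 has_real_derivative g2 y) (at y within {t0..})"
    and H1_pos: "\<forall>y\<ge>t0. g1 y > 0 \<and> g2 y > 0"
    and q: "q > 1" and p: "p > 0"
    and H1_q: "((\<lambda>y. (g1 y)\<^sup>2 / (ln (f y) * g2 y)) \<longlongrightarrow> q) at_top"
    and H1_p: "((\<lambda>y. y * g1 y / ln (f y)) \<longlongrightarrow> p) at_top"
    and s_pos: "\<forall>n. s n > 0" and t_pos: "\<forall>n. t n > 0"
    and st: "\<forall>n. s n < t n"
    and s_inf: "filterlim s at_top sequentially"
    and x: "x \<in> {0..1}"
    and ratio: "(\<lambda>n. s n / t n) \<longlonglongrightarrow> x"
  shows "(\<lambda>n. ln (f (s n)) / ln (f (t n))) \<longlonglongrightarrow> x powr p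
       \<and> (\<lambda>n. (g1 (s n) / g1 (t n)) powr q) \<longlonglongrightarrow> x powr p"
proof -
  have int: "at y within {t0..} = at y" if "y > t0" for y
    using that by (intro at_within_interior) auto
  have dg: "((\<lambda>u. ln (f u)) has_real_derivative g1 y) (at y)" if "y > t0" for y
    using g1[rule_format, of y] that int[OF that] by simp
  have dg1: "(g1 has_real_derivative g2 y) (at y)" if "y > t0" for y
    using g2[rule_format, of y] that int[OF that] by simp
  have "eventually (\<lambda>y. y * g1 y / ln (f y) > p / 2) at_top"
    using H1_p p by (intro order_tendstoD) auto
  then obtain T1 where T1: "\<And>y. y \<ge> T1 \<Longrightarrow> y * g1 y / ln (f y) > p / 2"
    by (auto simp: eventually_at_top_linorder)
  define T where "T = max (max t0 T1) 0"
  have gpos: "ln (f y) > 0" if "y > T" for y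
  proof -
    have "y * g1 y / ln (f y) > p / 2" using T1[of y] that by (simp add: T_def)
    then have "y * g1 y / ln (f y) > 0" using p by linarith
    moreover have "y * g1 y > 0" using that H1_pos by (auto simp: T_def)
    ultimately show ?thesis by (simp add: zero_less_divide_iff)
  qed
  have A: "(\<lambda>n. ln (f (s n)) / ln (f (t n))) \<longlonglongrightarrow> x powr p"
    by (rule key[of T "\<lambda>u. ln (f u)" g1 p]) (use dg gpos H1_p p s_pos st s_inf x ratio in \<open>auto simp: T_def\<close>)
  have lim2: "((\<lambda>y. y * g2 y / g1 y) \<longlongrightarrow> p / q) at_top"
  proof -
    have "((\<lambda>y. (y * g1 y / ln (f y)) / ((g1 y)\<^sup>2 / (ln (f y) * g2 y))) \<longlongrightarrow> p / q) at_top"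
      using q by (intro tendsto_divide H1_p H1_q) auto
    moreover have "eventually (\<lambda>y. (y * g1 y / ln (f y)) / ((g1 y)\<^sup>2 / (ln (f y) * g2 y)) = y * g2 y / g1 y) at_top"
      unfolding eventually_at_top_dense
    proof (intro exI allI impI)
      fix y assume y: "y > T"
      then have "ln (f y) > 0" "g1 y > 0" "g2 y > 0" using gpos H1_pos by (auto simp: T_def)
      then show "(y * g1 y / ln (f y)) / ((g1 y)\<^sup>2 / (ln (f y) * g2 y)) = y * g2 y / g1 y"
        by (simp add: field_simps power2_eq_square)
    qed
    ultimately show ?thesis by (simp only: tendsto_cong[of _ "\<lambda>y. y * g2 y / g1 y", symmetric])
  qed
  have B0: "(\<lambda>n. g1 (s n) / g1 (t n)) \<longlonglongrightarrow> x powr (p / q)"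
    by (rule key[of T g1 g2 "p / q"]) (use dg1 H1_pos lim2 p q s_pos st s_inf x ratio in \<open>auto simp: T_def\<close>)
  have "(\<lambda>n. (g1 (s n) / g1 (t n)) powr q) \<longlonglongrightarrow> (x powr (p / q)) powr q"
  proof (rule tendsto_powr'[OF B0 tendsto_const])
    have "eventually (\<lambda>n. s n > t0) sequentially"
      using s_inf unfolding filterlim_at_top_dense by blast
    then have "eventually (\<lambda>n. g1 (s n) / g1 (t n) \<ge> 0) sequentially"
    proof (rule eventually_mono)
      fix n assume "s n > t0"
      then have "g1 (s n) > 0" "g1 (t n) > 0" using H1_pos st[rule_format, of n] by auto
      then show "g1 (s n) / g1 (t n) \<ge> 0" by simp
    qed
    then show "x powr (p / q) \<noteq> 0 \<or> (q > 0 \<and> eventually (\<lambda>n. g1 (s n) / g1 (t n) \<ge> 0) sequentially)"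
      using q by simp
  qed
  moreover have "(x powr (p / q)) powr q = x powr p"
    using q by (simp add: powr_powr)
  ultimately show ?thesis using A by simp
qed

end
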